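(* Let $\mathcal{A}$ and $\mathcal{B}$ be nice GFG-tNCWs with $L(\mathcal{A})=L(\mathcal{B})$, each minimal (i.e., no GFG-tNCW recognizing the same language has fewer states). Then $\mathcal{A}$ and $\mathcal{B}$ are safe isomorphic.
   Context: A tNCW is $\mathcal{A}=\langle\Sigma,Q,q_0,\delta,\alpha\rangle$: finite alphabet $\Sigma$, finite state set $Q$, initial state $q_0$, transition function $\delta:Q\times\Sigma\to 2^Q\setminus\{\emptyset\}$ with transition relation $\Delta=\{\langle q,\sigma,s\rangle:s\in\delta(q,\sigma)\}$, and $\alpha\subseteq\Delta$; $|\mathcal{A}|=|Q|$. $\alpha$-transitions are those in $\alpha$, $\bar\alpha$-transitions those in $\Delta\setminus\alpha$; $\delta^{\alpha}(q,\sigma)$ and $\delta^{\bar\alpha}(q,\sigma)$ are the sets of $\sigma$-successors of $q$ via $\alpha$-, resp. $\bar\alpha$-transitions. A run on $w=\sigma_1\sigma_2\cdots$ is $r_0r_1\cdots$ with $r_0=q_0$, $r_{i+1}\in\delta(r_i,\sigma_{i+1})$; it is accepting iff it traverses $\alpha$-transitions only finitely often; $L(\mathcal{A})$ is the accepted language. $\mathcal{A}^q$ is $\mathcal{A}$ with initial state $q$; $q\sim s$ iff $L(\mathcal{A}^q)=L(\mathcal{A}^s)$. $\mathcal{A}$ is GFG if there is $f:\Sigma^*\to Q$ with $f(\epsilon)=q_0$, $\langle f(u),\sigma,f(u\sigma)\rangle\in\Delta$ for all $u,\sigma$, and for every $w\in L(\mathcal{A})$ the run $f(w[1,0]),f(w[1,1]),\dots$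 is accepting; state $q$ is GFG if $\mathcal{A}^q$ is. $\mathcal{A}$ is semantically deterministic if all $\sigma$-successors of any state are pairwise $\sim$-equivalent; safe deterministic if $|\delta^{\bar\alpha}(q,\sigma)|\le1$ always; normal if whenever a path of $\bar\alpha$-transitions leads from $q$ to $s$, one also leads from $s$ to $q$. $\mathcal{A}$ is nice if all states are reachable and GFG and $\mathcal{A}$ is normal, safe deterministic and semantically deterministic. For tNCWs $\mathcal{A},\mathcal{B}$ over the same alphabet with state sets $Q_\mathcal{A},Q_\mathcal{B}$, a bijection $\kappa:Q_\mathcal{A}\to Q_\mathcal{B}$ is $\bar\alpha$-transition respecting if for all $q,q'\in Q_\mathcal{A}$ and $\sigma\in\Sigma$: $q'\in\delta^{\bar\alpha}_\mathcal{A}(q,\sigma)$ iff $\kappa(q')\in\delta^{\bar\alpha}_\mathcal{B}(\kappa(q),\sigma)$. $\mathcal{A}$ and $\mathcal{B}$ are safe isomorphic if such a bijection exists. *)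

theory Defs
  imports Main
begin

record ('q, 's) tNCW =
  alph :: "'s set"
  states :: "'q set"
  init :: 'q
  trans :: "'q \<Rightarrow> 's \<Rightarrow> 'q set"
  acc :: "('q \<times> 's \<times> 'q) set"

definition Delta :: "('q, 's) tNCW \<Rightarrow> ('q \<times> 's \<times> 'q) set" where
  "Delta A = {(q, \<sigma>, s). q \<in> states A \<and> \<sigma> \<in> alph A \<and> s \<in> trans A q \<sigma>}"

definition wf_tNCW :: "('q, 's) tNCW \<Rightarrow> bool" where
  "wf_tNCW A \<longleftrightarrow> finite (alph A) \<and> finite (states A) \<and> init A \<in> states A \<and>
     (\<forall>q\<in>states A. \<forall>\<sigma>\<in>alph A. trans A q \<sigma> \<noteq> {} \<and> trans A q \<sigma> \<subseteq> states A) \<and>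
     acc A \<subseteq> Delta A"

text \<open>Infinite words are functions nat => letter; letter w i is sigma_(i+1).\<close>
definition is_word :: "('q, 's) tNCW \<Rightarrow> (nat \<Rightarrow> 's) \<Rightarrow> bool" where
  "is_word A w \<longleftrightarrow> (\<forall>i. w i \<in> alph A)"

definition is_run :: "('q, 's) tNCW \<Rightarrow> 'q \<Rightarrow> (nat \<Rightarrow> 's) \<Rightarrow> (nat \<Rightarrow> 'q) \<Rightarrow> bool" where
  "is_run A q w r \<longleftrightarrow> r 0 = q \<and> (\<forall>i. r (Suc i) \<in> trans A (r i) (w i))"

definition accepting :: "('q, 's) tNCW \<Rightarrow> (nat \<Rightarrow> 's) \<Rightarrow> (nat \<Rightarrow> 'q) \<Rightarrow> bool" where
  "accepting A w r \<longleftrightarrow> finite {i. (r i, w i, r (Suc i)) \<in> acc A}"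

definition lang_from :: "('q, 's) tNCW \<Rightarrow> 'q \<Rightarrow> (nat \<Rightarrow> 's) set" where
  "lang_from A q = {w. is_word A w \<and> (\<exists>r. is_run A q w r \<and> accepting A w r)}"

definition lang :: "('q, 's) tNCW \<Rightarrow> (nat \<Rightarrow> 's) set" where
  "lang A = lang_from A (init A)"

definition prefix :: "(nat \<Rightarrow> 's) \<Rightarrow> nat \<Rightarrow> 's list" where
  "prefix w i = map w [0..<i]"

definition GFG_state :: "('q, 's) tNCW \<Rightarrow> 'q \<Rightarrow> bool" where
  "GFG_state A q \<longleftrightarrow> (\<exists>f :: 's list \<Rightarrow> 'q. f [] = q \<and>
     (\<forall>u \<sigma>. set u \<subseteq> alph A \<and> \<sigma> \<in> alph A \<longrightarrow> (f u, \<sigma>, f (u @ [\<sigma>])) \<in> Delta A) \<and>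
     (\<forall>w \<in> lang_from A q. finite {i. (f (prefix w i), w i, f (prefix w (Suc i))) \<in> acc A}))"

definition GFG :: "('q, 's) tNCW \<Rightarrow> bool" where
  "GFG A \<longleftrightarrow> GFG_state A (init A)"

definition GFG_tNCW :: "('q, 's) tNCW \<Rightarrow> bool" where
  "GFG_tNCW A \<longleftrightarrow> wf_tNCW A \<and> GFG A"

definition delta_safe :: "('q, 's) tNCW \<Rightarrow> 'q \<Rightarrow> 's \<Rightarrow> 'q set" where
  "delta_safe A q \<sigma> = {s \<in> trans A q \<sigma>. (q, \<sigma>, s) \<notin> acc A}"

definition safe_edges :: "('q, 's) tNCW \<Rightarrow> ('q \<times> 'q) set" where
  "safe_edges A = {(q, s). q \<in> states A \<and> (\<exists>\<sigma>\<in>alph A. s \<in> delta_safe A q \<sigma>)}"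

definition all_edges :: "('q, 's) tNCW \<Rightarrow> ('q \<times> 'q) set" where
  "all_edges A = {(q, s). \<exists>\<sigma>. (q, \<sigma>, s) \<in> Delta A}"

definition all_reachable :: "('q, 's) tNCW \<Rightarrow> bool" where
  "all_reachable A \<longleftrightarrow> (\<forall>q\<in>states A. (init A, q) \<in> (all_edges A)\<^sup>*)"

definition safe_deterministic :: "('q, 's) tNCW \<Rightarrow> bool" where
  "safe_deterministic A \<longleftrightarrow> (\<forall>q\<in>states A. \<forall>\<sigma>\<in>alph A. card (delta_safe A q \<sigma>) \<le> 1)"

definition normal :: "('q, 's) tNCW \<Rightarrow> bool" where
  "normal A \<longleftrightarrow> (\<forall>q s. (q, s) \<in> (safe_edges A)\<^sup>* \<longrightarrow> (s, q) \<in> (safe_edges A)\<^sup>*)"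

definition sem_deterministic :: "('q, 's) tNCW \<Rightarrow> bool" where
  "sem_deterministic A \<longleftrightarrow> (\<forall>q\<in>states A. \<forall>\<sigma>\<in>alph A. \<forall>s1\<in>trans A q \<sigma>. \<forall>s2\<in>trans A q \<sigma>.
     lang_from A s1 = lang_from A s2)"

definition nice :: "('q, 's) tNCW \<Rightarrow> bool" where
  "nice A \<longleftrightarrow> all_reachable A \<and> (\<forall>q\<in>states A. GFG_state A q) \<and> normal A \<and>
     safe_deterministic A \<and> sem_deterministic A"

text \<open>Minimality among GFG-tNCWs over the same alphabet recognizing the same language.
  Competitors have states in nat (any finite state set can be renamed into nat).\<close>
definition minimal_GFG :: "('q, 's) tNCW \<Rightarrow> bool" where
  "minimal_GFG A \<longleftrightarrow> (\<forall>C :: (nat, 's) tNCW. GFG_tNCW C \<and> alph C = alph A \<and> lang C = lang A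
     \<longrightarrow> card (states A) \<le> card (states C))"

definition safe_isomorphic :: "('q, 's) tNCW \<Rightarrow> ('p, 's) tNCW \<Rightarrow> bool" where
  "safe_isomorphic A B \<longleftrightarrow> (\<exists>\<kappa>. bij_betw \<kappa> (states A) (states B) \<and>
     (\<forall>q\<in>states A. \<forall>q'\<in>states A. \<forall>\<sigma>\<in>alph A.
        q' \<in> delta_safe A q \<sigma> \<longleftrightarrow> \<kappa> q' \<in> delta_safe B (\<kappa> q) \<sigma>))"

end

theory Submission
  imports Defs
begin


definition sl :: "('q, 's) tNCW \<Rightarrow> 'q \<Rightarrow> (nat \<Rightarrow> 's) set" where
  "sl X q = {w. is_word X w \<and> (\<exists>r. is_run X q w r \<and> (\<forall>i. (r i, w i, r (Suc i)) \<notin> acc X))}"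

definition leq :: "('q, 's) tNCW \<Rightarrow> 'q \<Rightarrow> ('p, 's) tNCW \<Rightarrow> 'p \<Rightarrow> bool" where
  "leq X a Y c \<longleftrightarrow> lang_from X a = lang_from Y c \<and> sl X a \<subseteq> sl Y c"

definition eqv :: "('q, 's) tNCW \<Rightarrow> 'q \<Rightarrow> ('p, 's) tNCW \<Rightarrow> 'p \<Rightarrow> bool" where
  "eqv X a Y c \<longleftrightarrow> leq X a Y c \<and> leq Y c X a"

definition good :: "('q, 's) tNCW \<Rightarrow> bool" where
  "good X \<longleftrightarrow> wf_tNCW X \<and> normal X \<and> safe_deterministic X \<and> sem_deterministic X"

definition sfx :: "nat \<Rightarrow> (nat \<Rightarrow> 's) \<Rightarrow> (nat \<Rightarrow> 's)" where
  "sfx k w = (\<lambda>i. w (i + k))"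

definition conc :: "'s list \<Rightarrow> (nat \<Rightarrow> 's) \<Rightarrow> (nat \<Rightarrow> 's)" where
  "conc v w = (\<lambda>i. if i < length v then v ! i else w (i - length v))"

lemma leq_refl: "leq X a X a" by (simp add: leq_def)
lemma leq_trans: "leq X a Y b \<Longrightarrow> leq Y b Z c \<Longrightarrow> leq X a Z c"
  by (auto simp: leq_def)
lemma eqv_sym: "eqv X a Y b \<Longrightarrow> eqv Y b X a" by (auto simp: eqv_def)
lemma eqv_trans: "eqv X a Y b \<Longrightarrow> eqv Y b Z c \<Longrightarrow> eqv X a Z c"
  by (auto simp: eqv_def intro: leq_trans)
lemma eqv_refl: "eqv X a X a" by (simp add: eqv_def leq_refl)

lemma sfx_0[simp]: "sfx 0 w = w" by (simp add: sfx_def)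
lemma sfx_Suc: "case_nat (w k) (sfx (Suc k) w) = sfx k w"
  by (rule ext, simp add: sfx_def split: nat.split)
lemma conc_Nil[simp]: "conc [] w = w" by (simp add: conc_def)
lemma conc_snoc: "conc (v @ [\<sigma>]) w = conc v (case_nat \<sigma> w)"
proof (rule ext)
  fix i
  show "conc (v @ [\<sigma>]) w i = conc v (case_nat \<sigma> w) i"
  proof (cases "i < length v")
    case True then show ?thesis by (simp add: conc_def nth_append)
  next
    case False
    then show ?thesis
    proof (cases "i = length v")
      case True then show ?thesis by (simp add: conc_def)
    next
      case False
      with \<open>\<not> i < length v\<close> have "i - length v = Suc (i - Suc (length v))" by simp
      with False \<open>\<not> i < length v\<close> show ?thesis by (simp add: conc_def)
    qed
  qed
qed

lemma prefix_Suc: "prefix w (Suc i) = prefix w i @ [w i]"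
  by (simp add: prefix_def)
lemma length_prefix[simp]: "length (prefix w n) = n" by (simp add: prefix_def)
lemma conc_prefix_sfx: "conc (prefix w n) (sfx n w) = w"
  by (rule ext, simp add: conc_def prefix_def sfx_def)

lemma finite_Suc_shift: "finite {i. P (Suc i)} \<longleftrightarrow> finite {i::nat. P i}"
proof
  assume "finite {i. P (Suc i)}"
  then have "finite (insert 0 (Suc ` {i. P (Suc i)}))" by simp
  moreover have "{i. P i} \<subseteq> insert 0 (Suc ` {i. P (Suc i)})"
    by (auto, metis image_eqI mem_Collect_eq not0_implies_Suc)
  ultimately show "finite {i. P i}" by (rule finite_subset[rotated])
next
  assume "finite {i. P i}"
  then have "finite (Suc -` {i. P i})" by (rule finite_vimageI) simp
  then show "finite {i. P (Suc i)}" by (simp add: vimage_def)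
qed

lemma is_word_cons: "is_word X (case_nat \<sigma> w) \<longleftrightarrow> \<sigma> \<in> alph X \<and> is_word X w"
  by (auto simp: is_word_def split: nat.split)

lemma card_le1_eq: "finite S \<Longrightarrow> card S \<le> 1 \<Longrightarrow> x \<in> S \<Longrightarrow> y \<in> S \<Longrightarrow> x = y"
  using card_le_Suc0_iff_eq by fastforce

lemma wf_trans: "wf_tNCW X \<Longrightarrow> q \<in> states X \<Longrightarrow> \<sigma> \<in> alph X \<Longrightarrow> trans X q \<sigma> \<subseteq> states X"
  by (simp add: wf_tNCW_def)
lemma wf_trans_ne: "wf_tNCW X \<Longrightarrow> q \<in> states X \<Longrightarrow> \<sigma> \<in> alph X \<Longrightarrow> trans X q \<sigma> \<noteq> {}"
  by (simp add: wf_tNCW_def)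

lemma safe_det_eq:
  assumes "wf_tNCW X" "safe_deterministic X" "q \<in> states X" "\<sigma> \<in> alph X"
    "x \<in> delta_safe X q \<sigma>" "y \<in> delta_safe X q \<sigma>"
  shows "x = y"
proof -
  have "delta_safe X q \<sigma> \<subseteq> states X" using wf_trans[OF assms(1,3,4)] by (auto simp: delta_safe_def)
  moreover have "finite (states X)" using assms(1) by (simp add: wf_tNCW_def)
  ultimately have "finite (delta_safe X q \<sigma>)" by (rule finite_subset)
  then show ?thesis using assms card_le1_eq by (fastforce simp: safe_deterministic_def)
qed

lemma sl_sub_lang: "sl X q \<subseteq> lang_from X q"
  by (auto simp: sl_def lang_from_def accepting_def)

lemma resid:
  assumes "wf_tNCW X" "sem_deterministic X" "x \<in> states X" "\<sigma> \<in> alph X" "x' \<in> trans X x \<sigma>"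
  shows "lang_from X x' = {w. case_nat \<sigma> w \<in> lang_from X x}"
proof (intro set_eqI iffI)
  fix w assume "w \<in> lang_from X x'"
  then obtain r where w: "is_word X w" and r: "is_run X x' w r" and acc: "accepting X w r"
    by (auto simp: lang_from_def)
  let ?r = "case_nat x r"
  have "is_run X x (case_nat \<sigma> w) ?r"
    using r assms(5) by (auto simp: is_run_def split: nat.split)
  moreover have "accepting X (case_nat \<sigma> w) ?r"
    using acc unfolding accepting_def
    by (subst finite_Suc_shift[symmetric]) simp
  ultimately show "w \<in> {w. case_nat \<sigma> w \<in> lang_from X x}"
    using w assms(4) by (auto simp: lang_from_def is_word_cons)
next
  fix w assume "w \<in> {w. case_nat \<sigma> w \<in> lang_from X x}"
  then obtain r where w: "is_word X (case_nat \<sigma> w)" and r: "is_run X x (case_nat \<sigma> w) r"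
    and acc: "accepting X (case_nat \<sigma> w) r"
    by (auto simp: lang_from_def)
  have r1: "r 1 \<in> trans X x \<sigma>" using r by (auto simp: is_run_def elim: allE[of _ 0])
  have "is_run X (r 1) w (\<lambda>i. r (Suc i))" using r by (auto simp: is_run_def elim: allE[of _ "Suc _"])
  moreover have "accepting X w (\<lambda>i. r (Suc i))"
    using acc unfolding accepting_def
    by (subst (asm) finite_Suc_shift[symmetric]) simp
  ultimately have "w \<in> lang_from X (r 1)" using w by (auto simp: lang_from_def is_word_cons)
  moreover have "lang_from X (r 1) = lang_from X x'"
    using assms(2) r1 assms(3,4,5) unfolding sem_deterministic_def by blast
  ultimately show "w \<in> lang_from X x'" by simp
qed


inductive path :: "('q, 's) tNCW \<Rightarrow> 'q \<Rightarrow> 's list \<Rightarrow> 'q \<Rightarrow> bool" for X where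
  path_nil: "path X x [] x"
| path_snoc: "path X x v y \<Longrightarrow> \<sigma> \<in> alph X \<Longrightarrow> y' \<in> trans X y \<sigma> \<Longrightarrow> path X x (v @ [\<sigma>]) y'"

inductive spath :: "('q, 's) tNCW \<Rightarrow> 'q \<Rightarrow> 's list \<Rightarrow> 'q \<Rightarrow> bool" for X where
  spath_nil: "spath X x [] x"
| spath_snoc: "spath X x v y \<Longrightarrow> \<sigma> \<in> alph X \<Longrightarrow> y' \<in> delta_safe X y \<sigma> \<Longrightarrow> spath X x (v @ [\<sigma>]) y'"

lemma path_append: "path X y v' z \<Longrightarrow> path X x v y \<Longrightarrow> path X x (v @ v') z"
  by (induction rule: path.induct) (auto simp flip: append_assoc intro: path.intros)

lemma spath_append: "spath X y v' z \<Longrightarrow> spath X x v y \<Longrightarrow> spath X x (v @ v') z"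
  by (induction rule: spath.induct) (auto simp flip: append_assoc intro: spath.intros)

lemma spath_path: "spath X x v y \<Longrightarrow> path X x v y"
  by (induction rule: spath.induct) (auto simp: delta_safe_def intro: path.intros)

lemma spath_prefix: "spath X x vv z \<Longrightarrow> vv = v @ v' \<Longrightarrow> \<exists>y. spath X x v y"
proof (induction arbitrary: v' rule: spath.induct)
  case (spath_nil x) then show ?case by (auto intro: spath.intros)
next
  case (spath_snoc x vv y \<sigma> y' v')
  show ?case
  proof (cases "v' = []")
    case True then show ?thesis using spath_snoc by (auto intro: spath.intros)
  next
    case False
    then obtain v'' where "v' = v'' @ [last v']" by (metis append_butlast_last_id)
    with spath_snoc.prems have "vv = v @ v''" by (metis append.assoc butlast_snoc)
    then show ?thesis using spath_snoc.IH by blast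
  qed
qed

lemma spath_take: "spath X x v z \<Longrightarrow> \<exists>y. spath X x (take n v) y"
  using spath_prefix[of X x v z "take n v" "drop n v"] by simp

lemma path_states: "path X x v y \<Longrightarrow> wf_tNCW X \<Longrightarrow> x \<in> states X \<Longrightarrow> y \<in> states X"
  by (induction rule: path.induct) (auto dest: wf_trans)

lemma spath_states: "spath X x v y \<Longrightarrow> wf_tNCW X \<Longrightarrow> x \<in> states X \<Longrightarrow> y \<in> states X"
  using spath_path path_states by metis

lemma path_alph: "path X x v y \<Longrightarrow> set v \<subseteq> alph X"
  by (induction rule: path.induct) auto

lemma spath_alph: "spath X x v y \<Longrightarrow> set v \<subseteq> alph X"
  using spath_path path_alph by metis

lemma path_resid:
  assumes "path X x v y" "wf_tNCW X" "sem_deterministic X" "x \<in> states X"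
  shows "lang_from X y = {w. conc v w \<in> lang_from X x}"
  using assms
proof (induction rule: path.induct)
  case (path_nil x) then show ?case by simp
next
  case (path_snoc x v y \<sigma> y')
  have "y \<in> states X" using path_states path_snoc by metis
  then have "lang_from X y' = {w. case_nat \<sigma> w \<in> lang_from X y}"
    using resid path_snoc by metis
  then show ?case using path_snoc by (simp add: conc_snoc)
qed

lemma spath_rtrancl: "spath X x v y \<Longrightarrow> wf_tNCW X \<Longrightarrow> x \<in> states X \<Longrightarrow> (x, y) \<in> (safe_edges X)\<^sup>*"
proof (induction rule: spath.induct)
  case (spath_nil x) then show ?case by simp
next
  case (spath_snoc x v y \<sigma> y')
  have "y \<in> states X" using spath_states spath_snoc by metis
  then have "(y, y') \<in> safe_edges X" using spath_snoc by (auto simp: safe_edges_def)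
  then show ?case using spath_snoc by (meson rtrancl.rtrancl_into_rtrancl)
qed

lemma rtrancl_spath: "(x, y) \<in> (safe_edges X)\<^sup>* \<Longrightarrow> \<exists>v. spath X x v y"
proof (induction rule: rtrancl_induct)
  case base then show ?case by (auto intro: spath.intros)
next
  case (step y z)
  then obtain v where "spath X x v y" by blast
  moreover obtain \<sigma> where "\<sigma> \<in> alph X" "z \<in> delta_safe X y \<sigma>" using step(2) by (auto simp: safe_edges_def)
  ultimately show ?case by (auto intro: spath.intros)
qed

lemma rtrancl_path: "(x, y) \<in> (all_edges X)\<^sup>* \<Longrightarrow> \<exists>v. path X x v y"
proof (induction rule: rtrancl_induct)
  case base then show ?case by (auto intro: path.intros)
next
  case (step y z)
  then obtain v where "path X x v y" by blast
  moreover obtain \<sigma> where "\<sigma> \<in> alph X" "z \<in> trans X y \<sigma>" using step(2) by (auto simp: all_edges_def Delta_def)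
  ultimately show ?case by (auto intro: path.intros)
qed

primrec sr :: "('q, 's) tNCW \<Rightarrow> 'q \<Rightarrow> (nat \<Rightarrow> 's) \<Rightarrow> nat \<Rightarrow> 'q option" where
  "sr X x w 0 = Some x"
| "sr X x w (Suc n) = (case sr X x w n of None \<Rightarrow> None
     | Some y \<Rightarrow> if delta_safe X y (w n) = {} then None else Some (SOME y'. y' \<in> delta_safe X y (w n)))"

lemma sr_safe:
  assumes "\<forall>n. sr X x w n \<noteq> None" "is_word X w"
  shows "w \<in> sl X x"
proof -
  define r where "r n = the (sr X x w n)" for n
  have "r (Suc n) \<in> delta_safe X (r n) (w n)" for n
  proof -
    obtain y where y: "sr X x w n = Some y" using assms(1) by blast
    have "sr X x w (Suc n) \<noteq> None" using assms(1) by blast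
    then have "delta_safe X y (w n) \<noteq> {}" using y by (auto split: if_splits)
    then show ?thesis using y by (simp add: r_def some_in_eq)
  qed
  then have "is_run X x w r" "\<forall>i. (r i, w i, r (Suc i)) \<notin> acc X"
    by (auto simp: is_run_def r_def delta_safe_def)
  then show ?thesis using assms(2) by (auto simp: sl_def)
qed

lemma spath_sr:
  assumes "spath X x v y" "wf_tNCW X" "safe_deterministic X" "x \<in> states X"
  shows "\<forall>w. prefix w (length v) = v \<longrightarrow> sr X x w (length v) = Some y"
  using assms
proof (induction rule: spath.induct)
  case (spath_nil x) then show ?case by simp
next
  case (spath_snoc x v y \<sigma> y')
  show ?case
  proof (intro allI impI)
    fix w assume pw: "prefix w (length (v @ [\<sigma>])) = v @ [\<sigma>]"
    then have "prefix w (length v) = v" "w (length v) = \<sigma>" by (simp_all add: prefix_Suc)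
    then have sy: "sr X x w (length v) = Some y" using spath_snoc by blast
    have ys: "y \<in> states X" using spath_states[OF spath_snoc(1)] spath_snoc by blast
    have ne: "delta_safe X y \<sigma> \<noteq> {}" using spath_snoc by blast
    have "(SOME y'. y' \<in> delta_safe X y \<sigma>) = y'"
      using safe_det_eq[OF spath_snoc(5,6) ys spath_snoc(2)] spath_snoc(3) ne by (metis some_in_eq)
    then show "sr X x w (length (v @ [\<sigma>])) = Some y'"
      using sy ne \<open>w (length v) = \<sigma>\<close> by simp
  qed
qed

lemma safe_ne:
  assumes "wf_tNCW X" "normal X" "a \<in> states X" "\<sigma> \<in> alph X" "a' \<in> delta_safe X a \<sigma>"
  shows "sl X a' \<noteq> {}"
proof -
  define H where "H = {x \<in> states X. \<exists>\<sigma>\<in>alph X. delta_safe X x \<sigma> \<noteq> {}}"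
  have closed: "\<exists>\<tau> z. \<tau> \<in> alph X \<and> z \<in> delta_safe X x \<tau> \<and> z \<in> H" if "x \<in> H" for x
  proof -
    from that obtain \<tau> z where t: "\<tau> \<in> alph X" "z \<in> delta_safe X x \<tau>" "x \<in> states X"
      by (auto simp: H_def)
    then have zs: "z \<in> states X" using wf_trans[OF assms(1)] by (auto simp: delta_safe_def)
    have "(x, z) \<in> safe_edges X" using t by (auto simp: safe_edges_def)
    then have "(z, x) \<in> (safe_edges X)\<^sup>*" using assms(2) by (auto simp: normal_def)
    then have "z \<in> H"
    proof (cases rule: converse_rtranclE)
      case base then show ?thesis using that by simp
    next
      case (step u) then show ?thesis by (auto simp: safe_edges_def H_def)
    qed
    then show ?thesis using t by blast
  qed
  have aH: "a' \<in> H"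
  proof -
    have "\<exists>\<tau> z. \<tau> \<in> alph X \<and> z \<in> delta_safe X a \<tau> \<and> z \<in> H \<or> True" by simp
    have as: "a' \<in> states X" using assms wf_trans[OF assms(1)] by (auto simp: delta_safe_def)
    have "(a, a') \<in> safe_edges X" using assms by (auto simp: safe_edges_def)
    then have "(a', a) \<in> (safe_edges X)\<^sup>*" using assms(2) by (auto simp: normal_def)
    then show ?thesis
    proof (cases rule: converse_rtranclE)
      case base then show ?thesis using assms as by (auto simp: H_def)
    next
      case (step u) then show ?thesis by (auto simp: safe_edges_def H_def)
    qed
  qed
  define nxt where "nxt x = (SOME p. fst p \<in> alph X \<and> snd p \<in> delta_safe X x (fst p) \<and> snd p \<in> H)" for x
  have nxt: "fst (nxt x) \<in> alph X \<and> snd (nxt x) \<in> delta_safe X x (fst (nxt x)) \<and> snd (nxt x) \<in> H"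
    if xH: "x \<in> H" for x
  proof -
    obtain \<tau> z where "\<tau> \<in> alph X \<and> z \<in> delta_safe X x \<tau> \<and> z \<in> H" using closed[OF xH] by blast
    then have "\<exists>p. fst p \<in> alph X \<and> snd p \<in> delta_safe X x (fst p) \<and> snd p \<in> H"
      by (intro exI[of _ "(\<tau>, z)"]) simp
    then show ?thesis unfolding nxt_def by (rule someI_ex)
  qed
  define r where "r = rec_nat a' (\<lambda>_ x. snd (nxt x))"
  have r0: "r 0 = a'" and rS: "r (Suc i) = snd (nxt (r i))" for i by (simp_all add: r_def)
  have rH: "r i \<in> H" for i by (induction i) (use aH nxt in \<open>auto simp: r0 rS\<close>)
  define w where "w i = fst (nxt (r i))" for i
  have "w \<in> sl X a'"
    unfolding sl_def is_word_def is_run_def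
    using nxt[OF rH] by (auto simp: w_def r0 rS delta_safe_def intro!: exI[of _ r])
  then show ?thesis by blast
qed

lemma safe_cons:
  assumes "w \<in> sl X a'" "\<sigma> \<in> alph X" "a' \<in> delta_safe X a \<sigma>"
  shows "case_nat \<sigma> w \<in> sl X a"
proof -
  obtain r where "is_word X w" "is_run X a' w r" "\<forall>i. (r i, w i, r (Suc i)) \<notin> acc X"
    using assms(1) by (auto simp: sl_def)
  then show ?thesis using assms(2,3) unfolding sl_def
    by (intro CollectI conjI exI[of _ "case_nat a r"])
       (auto simp: is_word_cons is_run_def delta_safe_def split: nat.split)
qed

lemma safe_uncons:
  assumes "case_nat \<sigma> w \<in> sl X a"
  shows "\<exists>a'. a' \<in> delta_safe X a \<sigma> \<and> w \<in> sl X a'"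
proof -
  obtain r where r: "is_word X (case_nat \<sigma> w)" "is_run X a (case_nat \<sigma> w) r"
     "\<forall>i. (r i, (case_nat \<sigma> w) i, r (Suc i)) \<notin> acc X"
    using assms(1) by (auto simp: sl_def)
  have "r 1 \<in> delta_safe X a \<sigma>" using r(2) r(3)[rule_format, of 0]
    by (auto simp: is_run_def delta_safe_def elim: allE[of _ 0])
  moreover have "w \<in> sl X (r 1)" unfolding sl_def
    using r is_word_cons[of X \<sigma> w]
    by (auto simp: is_run_def intro!: exI[of _ "\<lambda>i. r (Suc i)"] elim: allE[of _ "Suc _"])
  ultimately show ?thesis by blast
qed

lemma prop_leq:
  assumes X: "good X" and Y: "good Y" and al: "alph X = alph Y"
    and a: "a \<in> states X" and c: "c \<in> states Y" and le: "leq X a Y c"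
    and s: "\<sigma> \<in> alph X" and a': "a' \<in> delta_safe X a \<sigma>"
  shows "\<exists>c'. c' \<in> delta_safe Y c \<sigma> \<and> leq X a' Y c'"
proof -
  have wX: "wf_tNCW X" "normal X" "sem_deterministic X" using X by (auto simp: good_def)
  have wY: "wf_tNCW Y" "safe_deterministic Y" "sem_deterministic Y" using Y by (auto simp: good_def)
  obtain w where "w \<in> sl X a'" using safe_ne[OF wX(1,2) a s a'] by blast
  then have "case_nat \<sigma> w \<in> sl Y c" using safe_cons[OF _ s a'] le by (auto simp: leq_def)
  from safe_uncons[OF this] obtain c' where c': "c' \<in> delta_safe Y c \<sigma>" by blast
  have sY: "\<sigma> \<in> alph Y" using s al by simp
  have "lang_from X a' = {w. case_nat \<sigma> w \<in> lang_from X a}"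
    using resid[OF wX(1,3) a s] a' by (auto simp: delta_safe_def)
  moreover have "lang_from Y c' = {w. case_nat \<sigma> w \<in> lang_from Y c}"
    using resid[OF wY(1,3) c sY] c' by (auto simp: delta_safe_def)
  ultimately have "lang_from X a' = lang_from Y c'" using le by (simp add: leq_def)
  moreover have "sl X a' \<subseteq> sl Y c'"
  proof
    fix v assume "v \<in> sl X a'"
    then have "case_nat \<sigma> v \<in> sl Y c" using safe_cons[OF _ s a'] le by (auto simp: leq_def)
    from safe_uncons[OF this] obtain c'' where "c'' \<in> delta_safe Y c \<sigma>" "v \<in> sl Y c''" by blast
    moreover have "c'' = c'" using safe_det_eq[OF wY(1,2) c sY] c' calculation by blast
    ultimately show "v \<in> sl Y c'" by simp
  qed
  ultimately show ?thesis using c' by (auto simp: leq_def)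
qed

lemma prop_eqv:
  assumes X: "good X" and Y: "good Y" and al: "alph X = alph Y"
    and a: "a \<in> states X" and c: "c \<in> states Y" and e: "eqv X a Y c"
    and s: "\<sigma> \<in> alph X" and a': "a' \<in> delta_safe X a \<sigma>"
  shows "\<exists>c'. c' \<in> delta_safe Y c \<sigma> \<and> eqv X a' Y c'"
proof -
  obtain c' where c': "c' \<in> delta_safe Y c \<sigma>" "leq X a' Y c'"
    using prop_leq[OF X Y al a c _ s a'] e by (auto simp: eqv_def)
  obtain a'' where a'': "a'' \<in> delta_safe X a \<sigma>" "leq Y c' X a''"
    using prop_leq[OF Y X al[symmetric] c a _ _ c'(1)] e s al by (auto simp: eqv_def)
  have "a'' = a'" using safe_det_eq[of X a \<sigma> a'' a'] X a s a' a'' by (auto simp: good_def)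
  then show ?thesis using c' a'' by (auto simp: eqv_def)
qed




section \<open>Domination lemma\<close>

lemma strat_path:
  assumes "\<forall>u \<sigma>. set u \<subseteq> alph Y \<and> \<sigma> \<in> alph Y \<longrightarrow> (f u, \<sigma>, f (u @ [\<sigma>])) \<in> Delta Y"
  shows "set v \<subseteq> alph Y \<Longrightarrow> path Y (f []) v (f v)"
proof (induction v rule: rev_induct)
  case Nil then show ?case by (auto intro: path.intros)
next
  case (snoc \<sigma> v)
  then have "path Y (f []) v (f v)" "\<sigma> \<in> alph Y" by auto
  moreover have "f (v @ [\<sigma>]) \<in> trans Y (f v) \<sigma>" using assms snoc.prems by (auto simp: Delta_def)
  ultimately show ?case by (auto intro: path.intros)
qed

lemma P1:
  assumes X: "good X" and Y: "good Y" and al: "alph X = alph Y"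
    and gX: "GFG_tNCW X" and gY: "GFG_tNCW Y" and rX: "all_reachable X"
    and L: "lang X = lang Y" and q: "q \<in> states X"
  shows "\<exists>s \<in> states Y. leq X q Y s"
proof (rule ccontr)
  assume nle: "\<not> (\<exists>s \<in> states Y. leq X q Y s)"
  have wX: "wf_tNCW X" "normal X" "safe_deterministic X" "sem_deterministic X"
    using X by (auto simp: good_def)
  have wY: "wf_tNCW Y" "normal Y" "safe_deterministic Y" "sem_deterministic Y"
    using Y by (auto simp: good_def)
  obtain u where u: "path X (init X) u q" using rX q rtrancl_path by (metis all_reachable_def)
  have iX: "init X \<in> states X" using wX by (simp add: wf_tNCW_def)
  have iY: "init Y \<in> states Y" using wY by (simp add: wf_tNCW_def)
  obtain f where f0: "f [] = init Y"
    and fD: "\<forall>u \<sigma>. set u \<subseteq> alph Y \<and> \<sigma> \<in> alph Y \<longrightarrow> (f u, \<sigma>, f (u @ [\<sigma>])) \<in> Delta Y"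
    and fA: "\<forall>w \<in> lang_from Y (init Y). finite {i. (f (prefix w i), w i, f (prefix w (Suc i))) \<in> acc Y}"
    using gY by (auto simp: GFG_tNCW_def GFG_def GFG_state_def)
  define S where "S = {s \<in> states Y. lang_from Y s = lang_from X q}"
  have blk: "\<exists>\<beta> n. spath X q \<beta> q \<and> n \<le> length \<beta> \<and> \<not> (\<exists>y. spath Y s (take n \<beta>) y)"
    if sS: "s \<in> S" for s
  proof -
    have sY: "s \<in> states Y" using sS by (simp add: S_def)
    have "\<not> sl X q \<subseteq> sl Y s" using nle sS by (auto simp: S_def leq_def)
    then obtain w where w: "w \<in> sl X q" "w \<notin> sl Y s" by blast
    have ww: "is_word Y w" using w(1) al by (auto simp: sl_def is_word_def)
    obtain n where n: "sr Y s w n = None" using sr_safe[OF _ ww] w(2) by blast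
    obtain r where r: "is_run X q w r" "\<forall>i. (r i, w i, r (Suc i)) \<notin> acc X" "is_word X w"
      using w(1) by (auto simp: sl_def)
    have sp: "spath X q (prefix w k) (r k)" for k
    proof (induction k)
      case 0 then show ?case using r by (simp add: prefix_def is_run_def spath_nil)
    next
      case (Suc k) then show ?case using r
        by (auto simp: prefix_Suc is_run_def is_word_def delta_safe_def intro: spath_snoc)
    qed
    have "(q, r n) \<in> (safe_edges X)\<^sup>*" using spath_rtrancl[OF sp wX(1) q] .
    then have "(r n, q) \<in> (safe_edges X)\<^sup>*" using wX(2) unfolding normal_def by blast
    from rtrancl_spath[OF this] obtain y where y: "spath X (r n) y q" by blast
    have "spath X q (prefix w n @ y) q" using spath_append[OF y sp] .
    moreover have "\<not> (\<exists>z. spath Y s (take n (prefix w n @ y)) z)"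
    proof
      assume "\<exists>z. spath Y s (take n (prefix w n @ y)) z"
      then obtain z where "spath Y s (prefix w n) z" by auto
      then have "sr Y s w n = Some z" using spath_sr[OF _ wY(1,3) sY] by (metis length_prefix)
      with n show False by simp
    qed
    ultimately show ?thesis by (intro exI[of _ "prefix w n @ y"] exI[of _ n]) auto
  qed
  define bet where "bet s = fst (SOME p. spath X q (fst p) q \<and> snd p \<le> length (fst p) \<and> \<not> (\<exists>y. spath Y s (take (snd p) (fst p)) y))" for s
  define nn where "nn s = snd (SOME p. spath X q (fst p) q \<and> snd p \<le> length (fst p) \<and> \<not> (\<exists>y. spath Y s (take (snd p) (fst p)) y))" for s
  have bet: "spath X q (bet s) q \<and> nn s \<le> length (bet s) \<and> \<not> (\<exists>y. spath Y s (take (nn s) (bet s)) y)"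
    if sS2: "s \<in> S" for s
  proof -
    obtain b n where "spath X q b q \<and> n \<le> length b \<and> \<not> (\<exists>y. spath Y s (take n b) y)" using blk[OF sS2] by blast
    then have "\<exists>p. spath X q (fst p) q \<and> snd p \<le> length (fst p) \<and> \<not> (\<exists>y. spath Y s (take (snd p) (fst p)) y)"
      by (intro exI[of _ "(b, n)"]) simp
    from someI_ex[OF this] show ?thesis unfolding bet_def nn_def .
  qed
  have fpath: "path Y (init Y) v (f v)" if "set v \<subseteq> alph Y" for v
    using strat_path[OF fD that] f0 by simp
  have fS: "f v \<in> S" if pv: "path X (init X) v q" for v
  proof -
    have sv: "set v \<subseteq> alph Y" using path_alph[OF pv] al by simp
    have "f v \<in> states Y" using path_states[OF fpath[OF sv] wY(1) iY] .
    moreover have "lang_from Y (f v) = {w. conc v w \<in> lang_from Y (init Y)}"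
      using path_resid[OF fpath[OF sv] wY(1,4) iY] .
    moreover have "lang_from X q = {w. conc v w \<in> lang_from X (init X)}"
      using path_resid[OF pv wX(1,4) iX] .
    ultimately show ?thesis using L by (simp add: S_def lang_def)
  qed
  define V where "V = rec_nat u (\<lambda>_ v. v @ bet (f v))"
  have V0: "V 0 = u" and VS: "V (Suc k) = V k @ bet (f (V k))" for k by (simp_all add: V_def)
  have inv: "(\<exists>t. V k = u @ t \<and> spath X q t q) \<and> f (V k) \<in> S \<and> k \<le> length (V k)" for k
  proof (induction k)
    case 0
    have "f u \<in> S" using fS[OF u] .
    then show ?case by (auto simp: V0 intro: spath_nil)
  next
    case (Suc k)
    then obtain t where t: "V k = u @ t" "spath X q t q" and fk: "f (V k) \<in> S" and lk: "k \<le> length (V k)"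
      by blast
    have b: "spath X q (bet (f (V k))) q" "nn (f (V k)) \<le> length (bet (f (V k)))"
      "\<not> (\<exists>y. spath Y (f (V k)) (take (nn (f (V k))) (bet (f (V k)))) y)"
      using bet[OF fk] by auto
    have "bet (f (V k)) \<noteq> []" using b(3) spath_nil[of Y "f (V k)"] by auto
    then have "length (bet (f (V k))) > 0" by simp
    then have len: "Suc k \<le> length (V (Suc k))" using lk unfolding VS length_append by linarith
    have sp: "spath X q (t @ bet (f (V k))) q" using spath_append[OF b(1) t(2)] .
    then have "path X (init X) (V (Suc k)) q"
      using path_append[OF spath_path[OF sp] u] by (simp add: VS t)
    then have "f (V (Suc k)) \<in> S" using fS by blast
    then show ?case using len sp by (auto simp: VS t)
  qed
  have Vmono: "\<exists>t. V m = V k @ t" if "k \<le> m" for k m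
    using that
  proof (induction m)
    case 0 then show ?case by simp
  next
    case (Suc m)
    show ?case
    proof (cases "k = Suc m")
      case True then show ?thesis by simp
    next
      case False
      then obtain t where "V m = V k @ t" using Suc by fastforce
      then show ?thesis by (simp add: VS)
    qed
  qed
  define W where "W i = V (Suc i) ! i" for i
  have Wnth: "W i = V k ! i" if "i < length (V k)" for i k
  proof -
    obtain t1 where t1: "V (max k (Suc i)) = V k @ t1" using Vmono[of k "max k (Suc i)"] by auto
    obtain t2 where t2: "V (max k (Suc i)) = V (Suc i) @ t2" using Vmono[of "Suc i" "max k (Suc i)"] by auto
    have "i < length (V (Suc i))" using inv[of "Suc i"] by auto
    then have "V (max k (Suc i)) ! i = W i" using t2 by (simp add: W_def nth_append)
    moreover have "V (max k (Suc i)) ! i = V k ! i" using t1 that by (simp add: nth_append)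
    ultimately show ?thesis by simp
  qed
  have Wpre: "prefix W (length (V k)) = V k" for k
    by (rule nth_equalityI) (auto simp: prefix_def Wnth)
  have pVk: "path X (init X) (V k) q" for k
  proof -
    obtain t where "V k = u @ t" "spath X q t q" using inv by blast
    then show ?thesis using path_append[OF spath_path u] by simp
  qed
  have Wword: "is_word X W"
    unfolding is_word_def
  proof
    fix i
    have "i < length (V (Suc i))" using inv[of "Suc i"] by auto
    then have "W i \<in> set (V (Suc i))" by (simp add: W_def)
    then show "W i \<in> alph X" using path_alph[OF pVk] by blast
  qed
  have Wsl: "sfx (length u) W \<in> sl X q"
  proof (rule sr_safe)
    show "is_word X (sfx (length u) W)" using Wword by (simp add: is_word_def sfx_def)
    show "\<forall>n. sr X q (sfx (length u) W) n \<noteq> None"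
    proof
      fix n
      obtain t where t: "V (length u + n) = u @ t" "spath X q t q" using inv by blast
      have "length u + n \<le> length (V (length u + n))" using inv by blast
      then have ln: "n \<le> length t" using t by simp
      have pre: "prefix (sfx (length u) W) n = take n t"
      proof (rule nth_equalityI)
        show "length (prefix (sfx (length u) W) n) = length (take n t)" using ln by simp
      next
        fix j assume "j < length (prefix (sfx (length u) W) n)"
        then have j: "j < n" by simp
        then have "j + length u < length (V (length u + n))" using t ln by simp
        then have "W (j + length u) = V (length u + n) ! (j + length u)" by (rule Wnth)
        then show "prefix (sfx (length u) W) n ! j = take n t ! j"
          using j ln by (simp add: prefix_def sfx_def t nth_append)
      qed
      obtain y where "spath X q (take n t) y" using spath_take[OF t(2)] by blast
      then have "sr X q (sfx (length u) W) (length (take n t)) = Some y"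
        using spath_sr[OF _ wX(1,3) q] pre by (metis length_prefix)
      then show "sr X q (sfx (length u) W) n \<noteq> None" using ln by simp
    qed
  qed
  then have "sfx (length u) W \<in> lang_from X q" by (rule subsetD[OF sl_sub_lang])
  then have "conc u (sfx (length u) W) \<in> lang_from X (init X)"
    using path_resid[OF u wX(1,4) iX] by blast
  moreover have "conc u (sfx (length u) W) = W"
    using conc_prefix_sfx[of W "length u"] Wpre[of 0] by (simp add: V0)
  ultimately have "W \<in> lang_from Y (init Y)" using L by (simp add: lang_def)
  then have fin: "finite {i. (f (prefix W i), W i, f (prefix W (Suc i))) \<in> acc Y}" using fA by blast
  have WwY: "is_word Y W" using Wword al by (simp add: is_word_def)
  have unb: "\<exists>i\<ge>k. (f (prefix W i), W i, f (prefix W (Suc i))) \<in> acc Y" for k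
  proof (rule ccontr)
    assume na: "\<not> (\<exists>i\<ge>k. (f (prefix W i), W i, f (prefix W (Suc i))) \<in> acc Y)"
    define s where "s = f (V k)"
    define t0 where "t0 = length (V k)"
    have sS: "s \<in> S" and kt: "k \<le> t0" using inv[of k] by (auto simp: s_def t0_def)
    note b = bet[OF sS]
    have VSk: "V (Suc k) = V k @ bet s" by (simp add: VS s_def)
    have "spath Y s (take j (bet s)) (f (prefix W (t0 + j)))" if "j \<le> nn s" for j
      using that
    proof (induction j)
      case 0 then show ?case using Wpre[of k] by (simp add: t0_def s_def spath_nil)
    next
      case (Suc j)
      then have jl: "j < length (bet s)" using b by simp
      have Wj: "W (t0 + j) = bet s ! j"
      proof -
        have "t0 + j < length (V (Suc k))" using jl by (simp add: VSk t0_def)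
        then have "W (t0 + j) = V (Suc k) ! (t0 + j)" by (rule Wnth)
        then show ?thesis by (simp add: VSk t0_def nth_append)
      qed
      have sa: "set (prefix W (t0 + j)) \<subseteq> alph Y" "W (t0 + j) \<in> alph Y"
        using WwY by (auto simp: prefix_def is_word_def)
      have D: "(f (prefix W (t0 + j)), W (t0 + j), f (prefix W (t0 + j) @ [W (t0 + j)])) \<in> Delta Y"
        using fD sa by blast
      have nacc: "(f (prefix W (t0 + j)), W (t0 + j), f (prefix W (Suc (t0 + j)))) \<notin> acc Y"
        using na kt by auto
      have "f (prefix W (t0 + Suc j)) \<in> delta_safe Y (f (prefix W (t0 + j))) (W (t0 + j))"
        using D nacc by (simp add: prefix_Suc Delta_def delta_safe_def)
      moreover have "take (Suc j) (bet s) = take j (bet s) @ [W (t0 + j)]"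
        using jl Wj by (simp add: take_Suc_conv_app_nth)
      ultimately show ?case using Suc sa by (auto intro: spath_snoc)
    qed
    then show False using b by blast
  qed
  obtain m where "\<forall>n\<in>{i. (f (prefix W i), W i, f (prefix W (Suc i))) \<in> acc Y}. n \<le> m"
    using fin finite_nat_set_iff_bounded_le by blast
  then show False using unb[of "Suc m"] by fastforce
qed



section \<open>The reduced automaton\<close>

definition Caut :: "('q, 's) tNCW \<Rightarrow> 'q set \<Rightarrow> ('q \<Rightarrow> 'q) \<Rightarrow> 'q \<Rightarrow> ('q, 's) tNCW" where
  "Caut A Q rep i0 = \<lparr>alph = alph A, states = Q, init = i0,
     trans = (\<lambda>x \<sigma>. {y \<in> Q. \<exists>x' \<in> trans A x \<sigma>. lang_from A y = lang_from A x'}),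
     acc = {(x, \<sigma>, y). x \<in> Q \<and> \<sigma> \<in> alph A \<and> y \<in> Q \<and>
        (\<exists>x' \<in> trans A x \<sigma>. lang_from A y = lang_from A x') \<and> y \<notin> rep ` delta_safe A x \<sigma>}\<rparr>"

fun gr :: "('q, 's) tNCW \<Rightarrow> ('q \<Rightarrow> 'q) \<Rightarrow> ('q \<Rightarrow> 'q) \<Rightarrow> ('s list \<Rightarrow> 'q) \<Rightarrow> 's list \<Rightarrow> 'q" where
  "gr A rep D f [] = D (init A)"
| "gr A rep D f (\<sigma> # ru) = (if delta_safe A (gr A rep D f ru) \<sigma> \<noteq> {}
     then rep (SOME x. x \<in> delta_safe A (gr A rep D f ru) \<sigma>) else D (f (rev (\<sigma> # ru))))"

lemma cons_lemma:
  assumes A: "good A" and gA: "GFG_tNCW A"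
    and Q: "Q \<subseteq> states A"
    and rep: "\<And>x \<sigma> x'. x \<in> Q \<Longrightarrow> \<sigma> \<in> alph A \<Longrightarrow> x' \<in> delta_safe A x \<sigma> \<Longrightarrow> rep x' \<in> Q \<and> eqv A x' A (rep x')"
    and D: "\<And>a. a \<in> states A \<Longrightarrow> D a \<in> Q \<and> leq A a A (D a)"
  shows "GFG_tNCW (Caut A Q rep (D (init A))) \<and> lang (Caut A Q rep (D (init A))) = lang A"
proof -
  define C where "C = Caut A Q rep (D (init A))"
  have wA: "wf_tNCW A" "normal A" "safe_deterministic A" "sem_deterministic A"
    using A by (auto simp: good_def)
  have iA: "init A \<in> states A" using wA by (simp add: wf_tNCW_def)
  have Calph: "alph C = alph A" and Cst: "states C = Q" and Cinit: "init C = D (init A)"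
    and Ctr: "trans C x \<sigma> = {y \<in> Q. \<exists>x' \<in> trans A x \<sigma>. lang_from A y = lang_from A x'}"
    and Cacc: "acc C = {(x, \<sigma>, y). x \<in> Q \<and> \<sigma> \<in> alph A \<and> y \<in> Q \<and>
        (\<exists>x' \<in> trans A x \<sigma>. lang_from A y = lang_from A x') \<and> y \<notin> rep ` delta_safe A x \<sigma>}"
    for x \<sigma> by (simp_all add: C_def Caut_def)
  have QA: "x \<in> states A" if "x \<in> Q" for x using Q that by blast
  have DA: "lang_from A (D a) = lang_from A a" if "a \<in> states A" for a
    using D[OF that] by (simp add: leq_def)
  have dsub: "delta_safe A x \<sigma> \<subseteq> trans A x \<sigma>" for x \<sigma> by (auto simp: delta_safe_def)
  have dsA: "delta_safe A x \<sigma> \<subseteq> states A" if "x \<in> states A" "\<sigma> \<in> alph A" for x \<sigma>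
    using wf_trans[OF wA(1) that] dsub by blast
  have wC: "wf_tNCW C"
  proof -
    have "finite (alph C)" "finite (states C)" using wA(1) Q finite_subset
      by (auto simp: wf_tNCW_def Calph Cst)
    moreover have "init C \<in> states C" using D[OF iA] by (simp add: Cinit Cst)
    moreover have "trans C x \<sigma> \<noteq> {} \<and> trans C x \<sigma> \<subseteq> states C"
      if "x \<in> states C" "\<sigma> \<in> alph C" for x \<sigma>
    proof -
      have x: "x \<in> states A" "\<sigma> \<in> alph A" using that QA by (auto simp: Cst Calph)
      obtain x' where x': "x' \<in> trans A x \<sigma>" using wf_trans_ne[OF wA(1) x] by blast
      have "x' \<in> states A" using wf_trans[OF wA(1) x] x' by blast
      then have "D x' \<in> trans C x \<sigma>" using D DA x' by (auto simp: Ctr)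
      then show ?thesis by (auto simp: Ctr Cst)
    qed
    moreover have "acc C \<subseteq> Delta C" by (auto simp: Cacc Delta_def Cst Calph Ctr)
    ultimately show ?thesis by (simp add: wf_tNCW_def)
  qed
  have dsC: "y \<in> rep ` delta_safe A x \<sigma>"
    if "x \<in> Q" "\<sigma> \<in> alph A" "y \<in> trans C x \<sigma>" "(x, \<sigma>, y) \<notin> acc C" for x \<sigma> y
    using that by (auto simp: Ctr Cacc)
  have residC: "lang_from A y = {w. case_nat \<sigma> w \<in> lang_from A x}"
    if hy: "x \<in> Q" "\<sigma> \<in> alph A" "y \<in> trans C x \<sigma>" for x \<sigma> y
  proof -
    obtain x' where "x' \<in> trans A x \<sigma>" "lang_from A y = lang_from A x'" using hy(3) by (auto simp: Ctr)
    then show ?thesis using resid[OF wA(1,4) QA[OF hy(1)] hy(2)] by simp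
  qed
  have sound: "w \<in> lang A" if wC: "w \<in> lang_from C (init C)" for w
  proof -
    obtain r where wr: "is_word C w" "is_run C (D (init A)) w r" "accepting C w r"
      using wC by (auto simp: lang_from_def Cinit)
    have ww: "is_word A w" using wr(1) by (simp add: is_word_def Calph)
    have rQ: "r i \<in> Q" for i
    proof (induction i)
      case 0 then show ?case using wr(2) D[OF iA] by (simp add: is_run_def)
    next
      case (Suc i) then show ?case using wr(2) by (auto simp: is_run_def Ctr)
    qed
    have rtr: "r (Suc i) \<in> trans C (r i) (w i)" for i using wr(2) by (simp add: is_run_def)
    have wi: "w i \<in> alph A" for i using ww by (simp add: is_word_def)
    have bck: "sfx k w \<in> lang_from A (r k) \<Longrightarrow> w \<in> lang_from A (r 0)" for k
    proof (induction k)
      case 0 then show ?case by simp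
    next
      case (Suc k)
      have "lang_from A (r (Suc k)) = {v. case_nat (w k) v \<in> lang_from A (r k)}"
        using residC[OF rQ wi rtr] .
      then have "sfx k w \<in> lang_from A (r k)" using Suc.prems sfx_Suc[of w k] by simp
      then show ?case using Suc.IH by blast
    qed
    obtain m where m: "\<forall>n\<in>{i. (r i, w i, r (Suc i)) \<in> acc C}. n \<le> m"
      using wr(3) finite_nat_set_iff_bounded_le by (auto simp: accepting_def)
    define k where "k = Suc m"
    have nacc: "(r i, w i, r (Suc i)) \<notin> acc C" if "i \<ge> k" for i
      using m that by (auto simp: k_def)
    define z where "z = rec_nat (r k) (\<lambda>j zj. SOME z'. z' \<in> delta_safe A zj (w (j + k)) \<and> eqv A z' A (r (Suc j + k)))"
    have z0: "z 0 = r k" and zS: "z (Suc j) = (SOME z'. z' \<in> delta_safe A (z j) (w (j + k)) \<and> eqv A z' A (r (Suc j + k)))" for j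
      by (simp_all add: z_def)
    have zinv: "z j \<in> states A \<and> eqv A (z j) A (r (j + k)) \<and> (j > 0 \<longrightarrow> z j \<in> delta_safe A (z (j - 1)) (w (j - 1 + k)))" for j
    proof (induction j)
      case 0 then show ?case using rQ QA by (simp add: z0 eqv_refl)
    next
      case (Suc j)
      then have zj: "z j \<in> states A" "eqv A (z j) A (r (j + k))" by auto
      have "r (Suc (j + k)) \<in> rep ` delta_safe A (r (j + k)) (w (j + k))"
        using dsC[OF rQ wi rtr nacc] by simp
      then obtain x'' where x'': "x'' \<in> delta_safe A (r (j + k)) (w (j + k))" "r (Suc (j + k)) = rep x''"
        by blast
      have ex'': "eqv A x'' A (rep x'')" using rep[OF rQ wi x''(1)] by simp
      obtain z' where z': "z' \<in> delta_safe A (z j) (w (j + k))" "eqv A x'' A z'"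
        using prop_eqv[OF A A refl QA[OF rQ] zj(1) eqv_sym[OF zj(2)] wi x''(1)] by blast
      have "eqv A z' A (r (Suc j + k))" using eqv_trans[OF eqv_sym[OF z'(2)] ex''] x''(2) by simp
      then have "\<exists>z'. z' \<in> delta_safe A (z j) (w (j + k)) \<and> eqv A z' A (r (Suc j + k))" using z' by blast
      from someI_ex[OF this] have "z (Suc j) \<in> delta_safe A (z j) (w (j + k)) \<and> eqv A (z (Suc j)) A (r (Suc j + k))"
        by (simp add: zS)
      then show ?case using dsA[OF zj(1) wi] by auto
    qed
    have "sfx k w \<in> sl A (r k)"
      unfolding sl_def
    proof (intro CollectI conjI exI[of _ z])
      show "is_word A (sfx k w)" using ww by (simp add: is_word_def sfx_def)
      show "is_run A (r k) (sfx k w) z" using zinv[of "Suc _"] by (auto simp: is_run_def z0 sfx_def delta_safe_def)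
      show "\<forall>i. (z i, sfx k w i, z (Suc i)) \<notin> acc A" using zinv[of "Suc _"] by (auto simp: sfx_def delta_safe_def)
    qed
    then have "sfx k w \<in> lang_from A (r k)" by (rule subsetD[OF sl_sub_lang])
    then have "w \<in> lang_from A (r 0)" by (rule bck)
    then show ?thesis using wr(2) DA[OF iA] by (simp add: is_run_def lang_def)
  qed
  obtain f where f0: "f [] = init A"
    and fD: "\<forall>u \<sigma>. set u \<subseteq> alph A \<and> \<sigma> \<in> alph A \<longrightarrow> (f u, \<sigma>, f (u @ [\<sigma>])) \<in> Delta A"
    and fA: "\<forall>w \<in> lang_from A (init A). finite {i. (f (prefix w i), w i, f (prefix w (Suc i))) \<in> acc A}"
    using gA by (auto simp: GFG_tNCW_def GFG_def GFG_state_def)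
  define g where "g u = gr A rep D f (rev u)" for u
  have g0: "g [] = D (init A)" by (simp add: g_def)
  have gS: "g (u @ [\<sigma>]) = (if delta_safe A (g u) \<sigma> \<noteq> {} then rep (SOME x. x \<in> delta_safe A (g u) \<sigma>)
     else D (f (u @ [\<sigma>])))" for u \<sigma> by (simp add: g_def)
  have fS: "f (u @ [\<sigma>]) \<in> trans A (f u) \<sigma>" "f u \<in> states A"
    if "set u \<subseteq> alph A" "\<sigma> \<in> alph A" for u \<sigma>
    using fD that by (auto simp: Delta_def)
  have ginv: "g u \<in> Q \<and> lang_from A (g u) = lang_from A (f u) \<and> f u \<in> states A"
    if "set u \<subseteq> alph A" for u
    using that
  proof (induction u rule: rev_induct)
    case Nil then show ?case using D[OF iA] DA[OF iA] by (simp add: g0 f0 iA)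
  next
    case (snoc \<sigma> u)
    then have IH: "g u \<in> Q" "lang_from A (g u) = lang_from A (f u)" "f u \<in> states A"
      and s: "\<sigma> \<in> alph A" and su: "set u \<subseteq> alph A" by auto
    have fs: "f (u @ [\<sigma>]) \<in> trans A (f u) \<sigma>" using fS[OF su s] by simp
    have fst: "f (u @ [\<sigma>]) \<in> states A" using wf_trans[OF wA(1) IH(3) s] fs by blast
    have rf: "lang_from A (f (u @ [\<sigma>])) = {v. case_nat \<sigma> v \<in> lang_from A (f u)}"
      using resid[OF wA(1,4) IH(3) s fs] .
    show ?case
    proof (cases "delta_safe A (g u) \<sigma> = {}")
      case True then show ?thesis using D[OF fst] DA[OF fst] fst by (simp add: gS)
    next
      case False
      define x where "x = (SOME x. x \<in> delta_safe A (g u) \<sigma>)"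
      have x: "x \<in> delta_safe A (g u) \<sigma>" using False by (simp add: x_def some_in_eq)
      have rx: "rep x \<in> Q" "lang_from A (rep x) = lang_from A x"
        using rep[OF IH(1) s x] unfolding eqv_def leq_def by metis+
      have xt: "x \<in> trans A (g u) \<sigma>" using x dsub by blast
      have "lang_from A x = {v. case_nat \<sigma> v \<in> lang_from A (g u)}"
        using resid[OF wA(1,4) QA[OF IH(1)] s xt] .
      then have "lang_from A (rep x) = lang_from A (f (u @ [\<sigma>]))" using rx(2) IH(2) rf by simp
      moreover have "g (u @ [\<sigma>]) = rep x" using False by (simp add: gS x_def)
      ultimately show ?thesis using rx(1) fst by simp
    qed
  qed
  have gD: "(g u, \<sigma>, g (u @ [\<sigma>])) \<in> Delta C" if su: "set u \<subseteq> alph A" and s: "\<sigma> \<in> alph A" for u \<sigma>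
  proof -
    have gi: "g u \<in> Q" "lang_from A (g u) = lang_from A (f u)" "f u \<in> states A" using ginv[OF su] by auto
    have gi2: "g (u @ [\<sigma>]) \<in> Q" "lang_from A (g (u @ [\<sigma>])) = lang_from A (f (u @ [\<sigma>]))"
      using ginv[of "u @ [\<sigma>]"] su s by auto
    have fs: "f (u @ [\<sigma>]) \<in> trans A (f u) \<sigma>" using fS[OF su s] by simp
    obtain x' where x': "x' \<in> trans A (g u) \<sigma>" using wf_trans_ne[OF wA(1) QA[OF gi(1)] s] by blast
    have "lang_from A x' = {v. case_nat \<sigma> v \<in> lang_from A (g u)}"
      using resid[OF wA(1,4) QA[OF gi(1)] s x'] .
    also have "\<dots> = lang_from A (f (u @ [\<sigma>]))"
      using resid[OF wA(1,4) gi(3) s fs] gi(2) by simp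
    finally have "g (u @ [\<sigma>]) \<in> trans C (g u) \<sigma>" using x' gi2 by (auto simp: Ctr)
    then show ?thesis using gi s by (simp add: Delta_def Cst Calph)
  qed
  have gacc: "finite {i. (g (prefix w i), w i, g (prefix w (Suc i))) \<in> acc C}" if wl: "w \<in> lang A" for w
  proof -
    have ww: "is_word A w" using wl by (simp add: lang_def lang_from_def)
    have wi: "w i \<in> alph A" for i using ww by (simp add: is_word_def)
    have sp: "set (prefix w i) \<subseteq> alph A" for i using ww by (auto simp: is_word_def prefix_def)
    define a where "a i = f (prefix w i)" for i
    define c where "c i = g (prefix w i)" for i
    obtain m where m: "\<forall>n\<in>{i. (a i, w i, a (Suc i)) \<in> acc A}. n \<le> m"
      using fA wl finite_nat_set_iff_bounded_le by (auto simp: lang_def a_def)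
    define k where "k = Suc m"
    have aS: "a (Suc i) \<in> trans A (a i) (w i)" "a i \<in> states A" for i
      using fS[OF sp wi] by (simp_all add: a_def prefix_Suc)
    have asafe: "a (Suc i) \<in> delta_safe A (a i) (w i)" if "i \<ge> k" for i
      using m that aS by (auto simp: k_def delta_safe_def)
    have cQ: "c i \<in> Q" for i using ginv[OF sp] by (simp add: c_def)
    have cS: "c (Suc i) = (if delta_safe A (c i) (w i) \<noteq> {} then rep (SOME x. x \<in> delta_safe A (c i) (w i))
      else D (a (Suc i)))" for i by (simp add: c_def a_def prefix_Suc gS)
    have accsub: "delta_safe A (c i) (w i) = {}" if "(c i, w i, c (Suc i)) \<in> acc C" for i
    proof (rule ccontr)
      assume ne: "delta_safe A (c i) (w i) \<noteq> {}"
      then have "c (Suc i) \<in> rep ` delta_safe A (c i) (w i)" by (simp add: cS some_in_eq)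
      then show False using that by (simp add: Cacc)
    qed
    have after: "leq A (a (Suc i + j)) A (c (Suc i + j))"
      if ik: "i \<ge> k" and st: "delta_safe A (c i) (w i) = {}" for i j
    proof (induction j)
      case 0 then show ?case using D[OF aS(2)] st by (simp add: cS)
    next
      case (Suc j)
      obtain c' where c': "c' \<in> delta_safe A (c (Suc i + j)) (w (Suc i + j))" "leq A (a (Suc (Suc i + j))) A c'"
        using prop_leq[OF A A refl aS(2) QA[OF cQ] Suc.IH wi asafe] ik by auto
      have "(SOME x. x \<in> delta_safe A (c (Suc i + j)) (w (Suc i + j))) = c'"
        using safe_det_eq[OF wA(1,3) QA[OF cQ] wi] c'(1) by (metis some_in_eq empty_iff)
      moreover have "delta_safe A (c (Suc i + j)) (w (Suc i + j)) \<noteq> {}" using c'(1) by blast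
      ultimately have "c (Suc (Suc i + j)) = rep c'" using cS[of "Suc i + j"] by simp
      moreover have "leq A c' A (rep c')" using rep[OF cQ wi c'(1)] by (simp add: eqv_def)
      ultimately show ?case using c'(2) leq_trans by fastforce
    qed
    have notst: "delta_safe A (c j) (w j) \<noteq> {}"
      if ik: "i \<ge> k" and st: "delta_safe A (c i) (w i) = {}" and ji: "j > i" for i j
    proof -
      obtain d where j: "j = Suc i + d" using ji less_iff_Suc_add by blast
      have jk: "Suc i + d \<ge> k" using ik by simp
      obtain c' where "c' \<in> delta_safe A (c (Suc i + d)) (w (Suc i + d))"
        using prop_leq[OF A A refl aS(2) QA[OF cQ] after[OF ik st, of d] wi asafe[OF jk]] by auto
      then show ?thesis using j by blast
    qed
    have "{i. (c i, w i, c (Suc i)) \<in> acc C} \<subseteq> {i. delta_safe A (c i) (w i) = {}}"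
      using accsub by blast
    moreover have "finite {i. delta_safe A (c i) (w i) = {}}"
    proof (cases "\<exists>i\<ge>k. delta_safe A (c i) (w i) = {}")
      case True
      then obtain i where i: "i \<ge> k" "delta_safe A (c i) (w i) = {}" by blast
      have "{i. delta_safe A (c i) (w i) = {}} \<subseteq> {..i}"
        using notst[OF i] by (auto simp: not_le[symmetric])
      then show ?thesis using finite_subset by blast
    next
      case False
      then have "{i. delta_safe A (c i) (w i) = {}} \<subseteq> {..<k}" by (auto simp: not_less[symmetric])
      then show ?thesis using finite_subset by blast
    qed
    ultimately show ?thesis using finite_subset by (simp add: c_def)
  qed
  have runC: "w \<in> lang_from C (init C)" if wl: "w \<in> lang A" for w
  proof -
    have ww: "is_word A w" using wl by (simp add: lang_def lang_from_def)
    have wi: "w i \<in> alph A" for i using ww by (simp add: is_word_def)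
    have sp: "set (prefix w i) \<subseteq> alph A" for i using ww by (auto simp: is_word_def prefix_def)
    have "is_run C (init C) w (\<lambda>i. g (prefix w i))"
      using gD[OF sp wi] by (auto simp: is_run_def Cinit g0 prefix_def Delta_def)
    then show ?thesis using gacc[OF wl] ww
      by (auto simp: lang_from_def accepting_def is_word_def Calph)
  qed
  have "GFG C"
    unfolding GFG_def GFG_state_def
  proof (intro exI[of _ g] conjI allI impI ballI)
    show "g [] = init C" by (simp add: g0 Cinit)
    fix u \<sigma> assume "set u \<subseteq> alph C \<and> \<sigma> \<in> alph C"
    then show "(g u, \<sigma>, g (u @ [\<sigma>])) \<in> Delta C" using gD by (simp add: Calph)
  next
    fix w assume "w \<in> lang_from C (init C)"
    then show "finite {i. (g (prefix w i), w i, g (prefix w (Suc i))) \<in> acc C}"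
      using gacc sound by blast
  qed
  moreover have "lang C = lang A" using sound runC by (auto simp: lang_def)
  ultimately show ?thesis using wC by (simp add: C_def GFG_tNCW_def)
qed



section \<open>Renaming states into nat\<close>

lemma rename:
  fixes C :: "('q, 's) tNCW"
  assumes gC: "GFG_tNCW C"
  shows "\<exists>C' :: (nat, 's) tNCW. GFG_tNCW C' \<and> alph C' = alph C \<and> lang C' = lang C \<and>
     card (states C') = card (states C)"
proof -
  have wC: "wf_tNCW C" using gC by (simp add: GFG_tNCW_def)
  have fin: "finite (states C)" using wC by (simp add: wf_tNCW_def)
  obtain h :: "'q \<Rightarrow> nat" and n where inj: "inj_on h (states C)"
    using finite_imp_inj_to_nat_seg[OF fin] by blast
  define hi where "hi = the_inv_into (states C) h"
  have hih: "hi (h x) = x" if "x \<in> states C" for x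
    using the_inv_into_f_f[OF inj that] by (simp add: hi_def)
  define C' :: "(nat, 's) tNCW" where "C' = \<lparr>alph = alph C, states = h ` states C, init = h (init C),
     trans = (\<lambda>n \<sigma>. h ` trans C (hi n) \<sigma>), acc = (\<lambda>(x, \<sigma>, y). (h x, \<sigma>, h y)) ` acc C\<rparr>"
  have C'a: "alph C' = alph C" and C's: "states C' = h ` states C" and C'i: "init C' = h (init C)"
    and C't: "trans C' n \<sigma> = h ` trans C (hi n) \<sigma>"
    and C'acc: "acc C' = (\<lambda>(x, \<sigma>, y). (h x, \<sigma>, h y)) ` acc C" for n \<sigma>
    by (simp_all add: C'_def)
  have accD: "acc C \<subseteq> Delta C" using wC by (simp add: wf_tNCW_def)
  have accI: "(h x, \<sigma>, h y) \<in> acc C' \<longleftrightarrow> (x, \<sigma>, y) \<in> acc C"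
    if "x \<in> states C" "y \<in> states C" for x y \<sigma>
  proof
    assume "(h x, \<sigma>, h y) \<in> acc C'"
    then obtain x0 \<sigma>0 y0 where e: "(x0, \<sigma>0, y0) \<in> acc C" "h x = h x0" "\<sigma> = \<sigma>0" "h y = h y0"
      by (auto simp: C'acc)
    have "x0 \<in> states C" "y0 \<in> states C" "\<sigma>0 \<in> alph C" using e(1) accD wf_trans[OF wC] by (auto simp: Delta_def)
    then have "x = x0" "y = y0" using e inj that by (auto dest: inj_onD)
    then show "(x, \<sigma>, y) \<in> acc C" using e by simp
  next
    assume "(x, \<sigma>, y) \<in> acc C"
    then show "(h x, \<sigma>, h y) \<in> acc C'" by (force simp: C'acc)
  qed
  have wC': "wf_tNCW C'"
  proof -
    have "finite (alph C')" "finite (states C')" using wC by (auto simp: wf_tNCW_def C'a C's)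
    moreover have "init C' \<in> states C'" using wC by (simp add: wf_tNCW_def C'i C's)
    moreover have "trans C' q \<sigma> \<noteq> {} \<and> trans C' q \<sigma> \<subseteq> states C'"
      if hq: "q \<in> states C'" "\<sigma> \<in> alph C'" for q \<sigma>
    proof -
      obtain x where x: "x \<in> states C" "q = h x" using hq by (auto simp: C's)
      then show ?thesis using wf_trans[OF wC x(1)] wf_trans_ne[OF wC x(1)] hq hih
        by (auto simp: C't C's C'a)
    qed
    moreover have "acc C' \<subseteq> Delta C'"
    proof
      fix t assume "t \<in> acc C'"
      then obtain x \<sigma> y where t: "t = (h x, \<sigma>, h y)" "(x, \<sigma>, y) \<in> acc C" by (auto simp: C'acc)
      then have "x \<in> states C" "\<sigma> \<in> alph C" "y \<in> trans C x \<sigma>" using accD by (auto simp: Delta_def)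
      then show "t \<in> Delta C'" using t hih by (auto simp: Delta_def C's C'a C't)
    qed
    ultimately show ?thesis by (simp add: wf_tNCW_def)
  qed
  have lang_eq: "lang_from C' (h (init C)) = lang_from C (init C)"
  proof (intro set_eqI iffI)
    fix w assume "w \<in> lang_from C (init C)"
    then obtain r where r: "is_word C w" "is_run C (init C) w r" "accepting C w r"
      by (auto simp: lang_from_def)
    have rs: "r i \<in> states C" for i
    proof (induction i)
      case 0 then show ?case using r(2) wC by (simp add: is_run_def wf_tNCW_def)
    next
      case (Suc i)
      have "r (Suc i) \<in> trans C (r i) (w i)" "w i \<in> alph C" using r by (auto simp: is_run_def is_word_def)
      then show ?case using wf_trans[OF wC Suc.IH] by blast
    qed
    have "is_run C' (h (init C)) w (\<lambda>i. h (r i))"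
      using r(2) rs hih by (auto simp: is_run_def C't)
    moreover have "accepting C' w (\<lambda>i. h (r i))"
      using r(3) accI[OF rs rs] by (simp add: accepting_def)
    ultimately show "w \<in> lang_from C' (h (init C))" using r(1) by (auto simp: lang_from_def is_word_def C'a)
  next
    fix w assume "w \<in> lang_from C' (h (init C))"
    then obtain r where r: "is_word C' w" "is_run C' (h (init C)) w r" "accepting C' w r"
      by (auto simp: lang_from_def)
    have rs: "\<exists>x. x \<in> states C \<and> r i = h x" for i
    proof (induction i)
      case 0 then show ?case using r(2) wC by (auto simp: is_run_def wf_tNCW_def)
    next
      case (Suc i)
      then obtain x where x: "x \<in> states C" "r i = h x" by blast
      have "r (Suc i) \<in> h ` trans C (hi (r i)) (w i)" using r(2) by (simp add: is_run_def C't)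
      then have "r (Suc i) \<in> h ` trans C x (w i)" using x hih by simp
      then show ?case using wf_trans[OF wC x(1)] r(1) by (auto simp: is_word_def C'a)
    qed
    define r0 where "r0 i = hi (r i)" for i
    have r0s: "r0 i \<in> states C" "r i = h (r0 i)" for i using rs[of i] hih by (auto simp: r0_def)
    have "is_run C (init C) w r0"
      unfolding is_run_def
    proof (intro conjI allI)
      show "r0 0 = init C" using r(2) wC hih by (simp add: r0_def is_run_def wf_tNCW_def)
      fix i
      have "r (Suc i) \<in> h ` trans C (r0 i) (w i)" using r(2) by (simp add: is_run_def C't r0_def)
      then obtain y where y: "y \<in> trans C (r0 i) (w i)" "r (Suc i) = h y" by blast
      have "y \<in> states C" using wf_trans[OF wC r0s(1)] r(1) y(1) by (auto simp: is_word_def C'a)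
      then show "r0 (Suc i) \<in> trans C (r0 i) (w i)" using y hih by (simp add: r0_def)
    qed
    moreover have "accepting C w r0"
      using r(3) accI[OF r0s(1) r0s(1)] r0s(2) by (simp add: accepting_def)
    ultimately show "w \<in> lang_from C (init C)" using r(1) by (auto simp: lang_from_def is_word_def C'a)
  qed
  have "GFG C'"
  proof -
    obtain f where f0: "f [] = init C"
      and fD: "\<forall>u \<sigma>. set u \<subseteq> alph C \<and> \<sigma> \<in> alph C \<longrightarrow> (f u, \<sigma>, f (u @ [\<sigma>])) \<in> Delta C"
      and fA: "\<forall>w \<in> lang_from C (init C). finite {i. (f (prefix w i), w i, f (prefix w (Suc i))) \<in> acc C}"
      using gC by (auto simp: GFG_tNCW_def GFG_def GFG_state_def)
    show ?thesis
      unfolding GFG_def GFG_state_def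
    proof (intro exI[of _ "\<lambda>u. h (f u)"] conjI allI impI ballI)
      show "h (f []) = init C'" by (simp add: f0 C'i)
      fix u \<sigma> assume "set u \<subseteq> alph C' \<and> \<sigma> \<in> alph C'"
      then have "(f u, \<sigma>, f (u @ [\<sigma>])) \<in> Delta C" using fD by (simp add: C'a)
      then show "(h (f u), \<sigma>, h (f (u @ [\<sigma>]))) \<in> Delta C'" using hih by (auto simp: Delta_def C's C'a C't)
    next
      fix w assume "w \<in> lang_from C' (init C')"
      then have wl: "w \<in> lang_from C (init C)" using lang_eq by (simp add: C'i)
      have ww: "is_word C w" using wl by (simp add: lang_from_def)
      have fs: "f (prefix w i) \<in> states C" for i
      proof (cases i)
        case 0 then show ?thesis using f0 wC by (simp add: prefix_def wf_tNCW_def)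
      next
        case (Suc j)
        have "set (prefix w j) \<subseteq> alph C" "w j \<in> alph C" using ww by (auto simp: is_word_def prefix_def)
        then have "(f (prefix w j), w j, f (prefix w j @ [w j])) \<in> Delta C"
          using fD by blast
        then show ?thesis using Suc wf_trans[OF wC] by (auto simp: Delta_def prefix_Suc)
      qed
      show "finite {i. (h (f (prefix w i)), w i, h (f (prefix w (Suc i)))) \<in> acc C'}"
        using fA wl accI[OF fs fs] by simp
    qed
  qed
  moreover have "card (states C') = card (states C)" using card_image[OF inj] by (simp add: C's)
  ultimately show ?thesis using wC' lang_eq
    by (intro exI[of _ C']) (simp add: GFG_tNCW_def C'a lang_def C'i)
qed



section \<open>Consequences of minimality\<close>

definition maxst :: "('q, 's) tNCW \<Rightarrow> 'q \<Rightarrow> bool" where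
  "maxst A m \<longleftrightarrow> m \<in> states A \<and> (\<forall>m' \<in> states A. leq A m A m' \<longrightarrow> leq A m' A m)"

lemma exists_max:
  assumes fin: "finite (states A)" and a: "a \<in> states A"
  shows "\<exists>m. maxst A m \<and> leq A a A m"
proof -
  define U where "U = {m \<in> states A. leq A a A m}"
  define dn where "dn m = card {x \<in> states A. leq A x A m}" for m
  have fU: "finite U" using fin by (simp add: U_def)
  have aU: "a \<in> U" using a by (simp add: U_def leq_refl)
  obtain m where m: "m \<in> U" "dn m = Max (dn ` U)"
    using Max_in[of "dn ` U"] fU aU by (metis empty_iff finite_imageI image_iff)
  have mge: "dn y \<le> dn m" if "y \<in> U" for y using Max_ge[of "dn ` U"] fU that m(2) by simp
  have "maxst A m"
    unfolding maxst_def
  proof (intro conjI ballI impI)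
    show "m \<in> states A" using m by (simp add: U_def)
    fix m' assume m': "m' \<in> states A" "leq A m A m'"
    show "leq A m' A m"
    proof (rule ccontr)
      assume nl: "\<not> leq A m' A m"
      have am: "leq A a A m" using m(1) by (simp add: U_def)
      have "m' \<in> U" using leq_trans[OF am m'(2)] m'(1) by (simp add: U_def)
      have sub: "{x \<in> states A. leq A x A m} \<subseteq> {x \<in> states A. leq A x A m'}"
      proof
        fix x assume "x \<in> {x \<in> states A. leq A x A m}"
        then show "x \<in> {x \<in> states A. leq A x A m'}" using leq_trans[OF _ m'(2), of A x] by simp
      qed
      have "m' \<in> {x \<in> states A. leq A x A m'}" "m' \<notin> {x \<in> states A. leq A x A m}"
        using m'(1) nl leq_refl by auto
      then have "{x \<in> states A. leq A x A m} \<subset> {x \<in> states A. leq A x A m'}" using sub by blast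
      then have "dn m < dn m'" unfolding dn_def by (rule psubset_card_mono[rotated]) (simp add: fin)
      then show False using mge[OF \<open>m' \<in> U\<close>] by simp
    qed
  qed
  moreover have "leq A a A m" using m(1) by (simp add: U_def)
  ultimately show ?thesis by blast
qed

lemma minimal_props:
  fixes A :: "('q, 's) tNCW"
  assumes A: "good A" and gA: "GFG_tNCW A" and mA: "minimal_GFG A"
  shows "(\<forall>p \<in> states A. \<exists>m. maxst A m \<and> (m, p) \<in> (safe_edges A)\<^sup>*) \<and>
         (\<forall>x \<in> states A. \<forall>y \<in> states A. eqv A x A y \<longrightarrow> x = y)"
proof -
  have wA: "wf_tNCW A" using A by (simp add: good_def)
  have fin: "finite (states A)" using wA by (simp add: wf_tNCW_def)
  define Q' where "Q' = {x \<in> states A. \<exists>m. maxst A m \<and> (m, x) \<in> (safe_edges A)\<^sup>*}"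
  define rep where "rep x = (SOME y. y \<in> Q' \<and> eqv A x A y)" for x
  define mx where "mx a = (SOME m. maxst A m \<and> leq A a A m)" for a
  define D where "D a = rep (mx a)" for a
  define Q'' where "Q'' = rep ` Q'"
  have repQ: "rep x \<in> Q' \<and> eqv A x A (rep x)" if "x \<in> Q'" for x
  proof -
    have "\<exists>y. y \<in> Q' \<and> eqv A x A y" using that by (intro exI[of _ x] conjI) (simp_all add: eqv_refl)
    then show ?thesis unfolding rep_def by (rule someI_ex)
  qed
  have Q'A: "Q' \<subseteq> states A" by (auto simp: Q'_def)
  have Q''Q': "Q'' \<subseteq> Q'" using repQ by (auto simp: Q''_def)
  have clos: "x' \<in> Q'" if "x \<in> Q'" "\<sigma> \<in> alph A" "x' \<in> delta_safe A x \<sigma>" for x \<sigma> x'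
  proof -
    have xs: "x \<in> states A" using that Q'A by blast
    have "(x, x') \<in> safe_edges A" using that xs by (auto simp: safe_edges_def)
    moreover have "x' \<in> states A" using wf_trans[OF wA xs that(2)] that(3) by (auto simp: delta_safe_def)
    ultimately show ?thesis using that(1) by (auto simp: Q'_def intro: rtrancl_into_rtrancl)
  qed
  have hrep: "rep x' \<in> Q'' \<and> eqv A x' A (rep x')"
    if "x \<in> Q''" "\<sigma> \<in> alph A" "x' \<in> delta_safe A x \<sigma>" for x \<sigma> x'
  proof -
    have "x' \<in> Q'" using clos that Q''Q' by blast
    then show ?thesis using repQ by (auto simp: Q''_def)
  qed
  have hD: "D a \<in> Q'' \<and> leq A a A (D a)" if "a \<in> states A" for a
  proof -
    have "\<exists>m. maxst A m \<and> leq A a A m" using exists_max[OF fin that] .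
    then have mm: "maxst A (mx a) \<and> leq A a A (mx a)" unfolding mx_def by (rule someI_ex)
    then have "mx a \<in> states A" by (simp add: maxst_def)
    then have mQ: "mx a \<in> Q'" using mm unfolding Q'_def by blast
    then have "rep (mx a) \<in> Q'" "eqv A (mx a) A (rep (mx a))" using repQ by auto
    then have "leq A (mx a) A (rep (mx a))" by (simp add: eqv_def)
    then have "leq A a A (rep (mx a))" by (rule leq_trans[OF conjunct2[OF mm]])
    moreover have "rep (mx a) \<in> Q''" using mQ by (simp add: Q''_def)
    ultimately show ?thesis by (simp add: D_def)
  qed
  have "GFG_tNCW (Caut A Q'' rep (D (init A))) \<and> lang (Caut A Q'' rep (D (init A))) = lang A"
  proof -
    have Q''A: "Q'' \<subseteq> states A" using Q''Q' Q'A by (rule subset_trans)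
    show ?thesis by (rule cons_lemma[OF A gA Q''A hrep hD])
  qed
  then obtain C' :: "(nat, 's) tNCW" where C': "GFG_tNCW C'" "alph C' = alph (Caut A Q'' rep (D (init A)))"
      "lang C' = lang (Caut A Q'' rep (D (init A)))"
    "card (states C') = card (states (Caut A Q'' rep (D (init A))))"
    using rename[of "Caut A Q'' rep (D (init A))"] by blast
  have C'2: "alph C' = alph A" "lang C' = lang A" "card (states C') = card Q''"
    using C' \<open>GFG_tNCW _ \<and> lang _ = lang A\<close> by (simp_all add: Caut_def)
  have "card (states A) \<le> card (states C')" using mA C'(1) C'2(1,2) unfolding minimal_GFG_def by blast
  then have "card (states A) \<le> card Q''" using C'2(3) by simp
  moreover have "card Q'' \<le> card Q'" unfolding Q''_def by (rule card_image_le) (use fin Q'A finite_subset in blast)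
  moreover have "card Q' \<le> card (states A)" using card_mono[OF fin Q'A] .
  ultimately have c1: "card Q' = card (states A)" and c2: "card (rep ` Q') = card Q'"
    by (simp_all add: Q''_def)
  have QA: "Q' = states A" using card_subset_eq[OF fin Q'A c1] .
  have inj: "inj_on rep Q'" using c2 fin QA by (simp add: inj_on_iff_eq_card)
  have p1: "\<forall>p \<in> states A. \<exists>m. maxst A m \<and> (m, p) \<in> (safe_edges A)\<^sup>*"
    using QA by (auto simp: Q'_def)
  have p2: "x = y" if "x \<in> states A" "y \<in> states A" "eqv A x A y" for x y
  proof -
    have "(\<lambda>z. z \<in> Q' \<and> eqv A x A z) = (\<lambda>z. z \<in> Q' \<and> eqv A y A z)"
    proof (rule ext)
      fix z
      show "(z \<in> Q' \<and> eqv A x A z) = (z \<in> Q' \<and> eqv A y A z)"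
        using eqv_trans[OF eqv_sym[OF that(3)], of A z] eqv_trans[OF that(3), of A z] by blast
    qed
    then have "rep x = rep y" by (simp add: rep_def)
    then show ?thesis using inj that QA by (auto dest: inj_onD)
  qed
  show ?thesis using p1 p2 by blast
qed

lemma partner:
  assumes X: "good X" and Y: "good Y" and al: "alph X = alph Y"
    and gX: "GFG_tNCW X" and gY: "GFG_tNCW Y" and rX: "all_reachable X" and rY: "all_reachable Y"
    and L: "lang X = lang Y"
    and MX: "\<forall>p \<in> states X. \<exists>m. maxst X m \<and> (m, p) \<in> (safe_edges X)\<^sup>*"
    and p: "p \<in> states X"
  shows "\<exists>q \<in> states Y. eqv X p Y q"
proof -
  obtain m where m: "maxst X m" "(m, p) \<in> (safe_edges X)\<^sup>*" using MX p by blast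
  have ms: "m \<in> states X" using m by (simp add: maxst_def)
  obtain q0 where q0: "q0 \<in> states Y" "leq X m Y q0" using P1[OF X Y al gX gY rX L ms] by blast
  obtain m'' where m'': "m'' \<in> states X" "leq Y q0 X m''"
    using P1[OF Y X al[symmetric] gY gX rY L[symmetric] q0(1)] by blast
  have "leq X m X m''" by (rule leq_trans[OF q0(2) m''(2)])
  then have "leq X m'' X m" using m(1) m''(1) by (simp add: maxst_def)
  then have "leq Y q0 X m" by (rule leq_trans[OF m''(2)])
  then have e0: "eqv X m Y q0" using q0 by (simp add: eqv_def)
  have wY: "wf_tNCW Y" using Y by (simp add: good_def)
  have "\<exists>q \<in> states Y. eqv X x Y q" if "(m, x) \<in> (safe_edges X)\<^sup>*" for x
    using that
  proof (induction rule: rtrancl_induct)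
    case base then show ?case using e0 q0 by blast
  next
    case (step y z)
    then obtain q where q: "q \<in> states Y" "eqv X y Y q" by blast
    obtain \<sigma> where s: "y \<in> states X" "\<sigma> \<in> alph X" "z \<in> delta_safe X y \<sigma>"
      using step(2) by (auto simp: safe_edges_def)
    obtain c' where c': "c' \<in> delta_safe Y q \<sigma>" "eqv X z Y c'"
      using prop_eqv[OF X Y al s(1) q(1) q(2) s(2,3)] by blast
    have "c' \<in> states Y" using wf_trans[OF wY q(1)] s(2) al c'(1) by (auto simp: delta_safe_def)
    then show ?case using c' by blast
  qed
  then show ?thesis using m(2) by blast
qed

theorem mainTheorem2:
  fixes A :: "('q, 's) tNCW" and B :: "('p, 's) tNCW"
  assumes "GFG_tNCW A" and "GFG_tNCW B"
    and "alph A = alph B"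
    and "nice A" and "nice B"
    and "lang A = lang B"
    and "minimal_GFG A" and "minimal_GFG B"
  shows "safe_isomorphic A B"
proof -
  note gA = assms(1) and gB = assms(2) and al = assms(3) and L = assms(6)
  have A: "good A" using assms(1,4) by (simp add: good_def nice_def GFG_tNCW_def)
  have B: "good B" using assms(2,5) by (simp add: good_def nice_def GFG_tNCW_def)
  have rA: "all_reachable A" and rB: "all_reachable B" using assms(4,5) by (simp_all add: nice_def)
  have MA: "\<forall>p \<in> states A. \<exists>m. maxst A m \<and> (m, p) \<in> (safe_edges A)\<^sup>*"
    and UA: "\<forall>x \<in> states A. \<forall>y \<in> states A. eqv A x A y \<longrightarrow> x = y"
    using minimal_props[OF A gA assms(7)] by auto
  have MB: "\<forall>p \<in> states B. \<exists>m. maxst B m \<and> (m, p) \<in> (safe_edges B)\<^sup>*"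
    and UB: "\<forall>x \<in> states B. \<forall>y \<in> states B. eqv B x B y \<longrightarrow> x = y"
    using minimal_props[OF B gB assms(8)] by auto
  have exA: "\<exists>q \<in> states B. eqv A p B q" if "p \<in> states A" for p
    using partner[OF A B al gA gB rA rB L MA that] .
  have exB: "\<exists>q \<in> states A. eqv B p A q" if "p \<in> states B" for p
    using partner[OF B A al[symmetric] gB gA rB rA L[symmetric] MB that] .
  define \<kappa> where "\<kappa> p = (SOME q. q \<in> states B \<and> eqv A p B q)" for p
  have k: "\<kappa> p \<in> states B \<and> eqv A p B (\<kappa> p)" if "p \<in> states A" for p
  proof -
    have "\<exists>q. q \<in> states B \<and> eqv A p B q" using exA[OF that] by blast
    then show ?thesis unfolding \<kappa>_def by (rule someI_ex)
  qed
  have wA: "wf_tNCW A" and wB: "wf_tNCW B" using A B by (simp_all add: good_def)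
  have bij: "bij_betw \<kappa> (states A) (states B)"
    unfolding bij_betw_def
  proof
    show "inj_on \<kappa> (states A)"
    proof (rule inj_onI)
      fix x y assume xy: "x \<in> states A" "y \<in> states A" "\<kappa> x = \<kappa> y"
      have e1: "eqv A x B (\<kappa> y)" using conjunct2[OF k[OF xy(1)]] xy(3) by simp
      have "eqv A x A y" using eqv_trans[OF e1 eqv_sym[OF conjunct2[OF k[OF xy(2)]]]] .
      then show "x = y" using UA xy by blast
    qed
    show "\<kappa> ` states A = states B"
    proof
      show "\<kappa> ` states A \<subseteq> states B" using k by blast
      show "states B \<subseteq> \<kappa> ` states A"
      proof
        fix q assume q: "q \<in> states B"
        obtain p where p: "p \<in> states A" "eqv B q A p" using exB[OF q] by blast
        have "eqv B q B (\<kappa> p)" using eqv_trans[OF p(2) conjunct2[OF k[OF p(1)]]] .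
        then have "q = \<kappa> p" using UB q k[OF p(1)] by blast
        then show "q \<in> \<kappa> ` states A" using p by blast
      qed
    qed
  qed
  have tr: "q' \<in> delta_safe A q \<sigma> \<longleftrightarrow> \<kappa> q' \<in> delta_safe B (\<kappa> q) \<sigma>"
    if q: "q \<in> states A" and q': "q' \<in> states A" and s: "\<sigma> \<in> alph A" for q q' \<sigma>
  proof
    assume d: "q' \<in> delta_safe A q \<sigma>"
    obtain c' where c': "c' \<in> delta_safe B (\<kappa> q) \<sigma>" "eqv A q' B c'"
      using prop_eqv[OF A B al q _ _ s d] k[OF q] by blast
    have cs: "c' \<in> states B" using wf_trans[OF wB] k[OF q] s al c'(1) by (auto simp: delta_safe_def)
    have "eqv B (\<kappa> q') B c'" using eqv_trans[OF eqv_sym[OF conjunct2[OF k[OF q']]] c'(2)] .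
    then have "\<kappa> q' = c'" using UB cs k[OF q'] by blast
    then show "\<kappa> q' \<in> delta_safe B (\<kappa> q) \<sigma>" using c' by simp
  next
    assume d: "\<kappa> q' \<in> delta_safe B (\<kappa> q) \<sigma>"
    obtain a' where a': "a' \<in> delta_safe A q \<sigma>" "eqv B (\<kappa> q') A a'"
      using prop_eqv[OF B A al[symmetric] conjunct1[OF k[OF q]] q eqv_sym[OF conjunct2[OF k[OF q]]] _ d] s al by blast
    have as: "a' \<in> states A" using wf_trans[OF wA q s] a'(1) by (auto simp: delta_safe_def)
    have "eqv A q' A a'" using eqv_trans[OF conjunct2[OF k[OF q']] a'(2)] .
    then have "q' = a'" using UA as q' by blast
    then show "q' \<in> delta_safe A q \<sigma>" using a' by simp
  qed
  show ?thesis unfolding safe_isomorphic_def using bij tr by blast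
qed

end
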